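(* Let $S$ be a functional PTS specification. If $\Gamma\models_S M:A$, $\Gamma\vdash_{\lambda S^*}M':A$ and $M\equiv_\beta M'$, then $\Gamma\models_S M':A$.
   Context: PTS: specification $S=(\mathcal S,\mathcal A,\mathcal R)$ (sorts, axioms $(s_1:s_2)$, rules $(s_1,s_2,s_3)$), functional meaning $\mathcal A,\mathcal R$ are functional relations; $\lambda S$ has terms $s\mid x\mid M\,N\mid\lambda x:A.M\mid\Pi x:A.B$ and the standard PTS typing rules (conversion modulo $\equiv_\beta$); $\mathrm{WF}_{\lambda S}(\Gamma)$ means $\Gamma$ is well formed. A top-sort is a sort $s$ with no $(s:s')\in\mathcal A$. The minimal completion $S^*$: sorts $\mathcal S\cup\{\tau\}$ ($\tau\notin\mathcal S$), axioms $\mathcal A\cup\{(s_1:\tau)\mid s_1$ a top-sort of $S\}$, rules $\mathcal R\cup\{(s_1,s_2,\tau)\mid s_1,s_2\in\mathcal S\cup\{\tau\}$, no $s_3$ with $(s_1,s_2,s_3)\in\mathcal R\}$. Reducibility predicate $\Gamma\models_S M:A$, defined by recursion: it holds iff $\mathrm{WF}_{\lambda S}(\Gamma)$, $\Gamma\vdash_{\lambda S^*}M:A$ and $\Gamma\vdash_{\lambda S^*}A:s$ for some sort $s$, and moreover: if $s\neq\tau$ or $A=s'$ for some $s'\in\mathcal S$, then there are $M',A'$ with $M\longrightarrow_\beta^*M'$, $A\longrightarrow_\beta^*A'$ and $\Gamma\vdash_{\lambda S}M':A'$; if $s=\tau$ and $A=\Pi x:B.C$, then for every $N$ with $\Gamma\models_S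 N:B$ we have $\Gamma\models_S M\,N:C[N/x]$. (These cases are exhaustive and the recursion is well founded.) *)

theory Defs
  imports Main
begin

datatype 's trm =
    Srt 's
  | Var nat
  | App "'s trm" "'s trm"
  | Lam "'s trm" "'s trm"   (* Lam A M  =  \<lambda>x:A. M, body under one binder *)
  | Pi  "'s trm" "'s trm"   (* Pi A B   =  \<Pi>x:A. B, codomain under one binder *)

fun lift :: "nat \<Rightarrow> 's trm \<Rightarrow> 's trm" where
  "lift k (Srt s) = Srt s"
| "lift k (Var i) = (if i < k then Var i else Var (Suc i))"
| "lift k (App M N) = App (lift k M) (lift k N)"
| "lift k (Lam A M) = Lam (lift k A) (lift (Suc k) M)"
| "lift k (Pi A B) = Pi (lift k A) (lift (Suc k) B)"

fun subst :: "'s trm \<Rightarrow> nat \<Rightarrow> 's trm \<Rightarrow> 's trm" where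
  "subst (Srt s) k N = Srt s"
| "subst (Var i) k N = (if i < k then Var i else if i = k then N else Var (i - 1))"
| "subst (App M1 M2) k N = App (subst M1 k N) (subst M2 k N)"
| "subst (Lam A M) k N = Lam (subst A k N) (subst M (Suc k) (lift 0 N))"
| "subst (Pi A B) k N = Pi (subst A k N) (subst B (Suc k) (lift 0 N))"

inductive beta :: "'s trm \<Rightarrow> 's trm \<Rightarrow> bool" where
  beta_redex: "beta (App (Lam A M) N) (subst M 0 N)"
| beta_appL: "beta M M' \<Longrightarrow> beta (App M N) (App M' N)"
| beta_appR: "beta N N' \<Longrightarrow> beta (App M N) (App M N')"
| beta_lamL: "beta A A' \<Longrightarrow> beta (Lam A M) (Lam A' M)"
| beta_lamR: "beta M M' \<Longrightarrow> beta (Lam A M) (Lam A M')"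
| beta_piL: "beta A A' \<Longrightarrow> beta (Pi A B) (Pi A' B)"
| beta_piR: "beta B B' \<Longrightarrow> beta (Pi A B) (Pi A B')"

abbreviation beta_star :: "'s trm \<Rightarrow> 's trm \<Rightarrow> bool" where
  "beta_star \<equiv> beta\<^sup>*\<^sup>*"

abbreviation beta_eq :: "'s trm \<Rightarrow> 's trm \<Rightarrow> bool" where
  "beta_eq \<equiv> equivclp beta"

text \<open>Typing for the PTS with axioms Ax and rules Rl. Contexts are lists of types,
  the head being the type of de Bruijn variable 0.\<close>
inductive has_type :: "('s \<times> 's) set \<Rightarrow> ('s \<times> 's \<times> 's) set
                  \<Rightarrow> 's trm list \<Rightarrow> 's trm \<Rightarrow> 's trm \<Rightarrow> bool"
  for Ax Rl where
  t_axiom: "(s1, s2) \<in> Ax \<Longrightarrow> has_type Ax Rl [] (Srt s1) (Srt s2)"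
| t_start: "has_type Ax Rl \<Gamma> A (Srt s) \<Longrightarrow> has_type Ax Rl (A # \<Gamma>) (Var 0) (lift 0 A)"
| t_weak: "has_type Ax Rl \<Gamma> M B \<Longrightarrow> has_type Ax Rl \<Gamma> C (Srt s)
           \<Longrightarrow> has_type Ax Rl (C # \<Gamma>) (lift 0 M) (lift 0 B)"
| t_pi: "has_type Ax Rl \<Gamma> A (Srt s1) \<Longrightarrow> has_type Ax Rl (A # \<Gamma>) B (Srt s2) \<Longrightarrow> (s1, s2, s3) \<in> Rl
         \<Longrightarrow> has_type Ax Rl \<Gamma> (Pi A B) (Srt s3)"
| t_lam: "has_type Ax Rl (A # \<Gamma>) M B \<Longrightarrow> has_type Ax Rl \<Gamma> (Pi A B) (Srt s)
          \<Longrightarrow> has_type Ax Rl \<Gamma> (Lam A M) (Pi A B)"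
| t_app: "has_type Ax Rl \<Gamma> M (Pi A B) \<Longrightarrow> has_type Ax Rl \<Gamma> N A
          \<Longrightarrow> has_type Ax Rl \<Gamma> (App M N) (subst B 0 N)"
| t_conv: "has_type Ax Rl \<Gamma> M A \<Longrightarrow> has_type Ax Rl \<Gamma> B (Srt s) \<Longrightarrow> beta_eq A B
           \<Longrightarrow> has_type Ax Rl \<Gamma> M B"

inductive wf_ctx :: "('s \<times> 's) set \<Rightarrow> ('s \<times> 's \<times> 's) set \<Rightarrow> 's trm list \<Rightarrow> bool"
  for Ax Rl where
  wf_nil: "wf_ctx Ax Rl []"
| wf_cons: "has_type Ax Rl \<Gamma> A (Srt s) \<Longrightarrow> wf_ctx Ax Rl (A # \<Gamma>)"

definition functional_spec :: "'s set \<Rightarrow> ('s \<times> 's) set \<Rightarrow> ('s \<times> 's \<times> 's) set \<Rightarrow> bool" where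
  "functional_spec Srts Ax Rl \<longleftrightarrow>
     Ax \<subseteq> Srts \<times> Srts \<and> Rl \<subseteq> Srts \<times> Srts \<times> Srts \<and>
     (\<forall>s1 s2 s2'. (s1, s2) \<in> Ax \<longrightarrow> (s1, s2') \<in> Ax \<longrightarrow> s2 = s2') \<and>
     (\<forall>s1 s2 s3 s3'. (s1, s2, s3) \<in> Rl \<longrightarrow> (s1, s2, s3') \<in> Rl \<longrightarrow> s3 = s3')"

definition top_sort :: "'s set \<Rightarrow> ('s \<times> 's) set \<Rightarrow> 's \<Rightarrow> bool" where
  "top_sort Srts Ax s \<longleftrightarrow> s \<in> Srts \<and> (\<nexists>s'. (s, s') \<in> Ax)"

text \<open>Both \<lambda>S and \<lambda>S* are formulated over sort type 's option: Some s is the sort s of S,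
  None is the fresh sort \<tau> of the minimal completion S*.\<close>

definition ax_S :: "('s \<times> 's) set \<Rightarrow> ('s option \<times> 's option) set" where
  "ax_S Ax = {(Some a, Some b) | a b. (a, b) \<in> Ax}"

definition rl_S :: "('s \<times> 's \<times> 's) set \<Rightarrow> ('s option \<times> 's option \<times> 's option) set" where
  "rl_S Rl = {(Some a, Some b, Some c) | a b c. (a, b, c) \<in> Rl}"

definition srts_star :: "'s set \<Rightarrow> 's option set" where
  "srts_star Srts = Some ` Srts \<union> {None}"

definition ax_star :: "'s set \<Rightarrow> ('s \<times> 's) set \<Rightarrow> ('s option \<times> 's option) set" where
  "ax_star Srts Ax = ax_S Ax \<union> {(Some s, None) | s. top_sort Srts Ax s}"

definition rl_star :: "'s set \<Rightarrow> ('s \<times> 's \<times> 's) set \<Rightarrow> ('s option \<times> 's option \<times> 's option) set" where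
  "rl_star Srts Rl = rl_S Rl \<union>
     {(s1, s2, None) | s1 s2. s1 \<in> srts_star Srts \<and> s2 \<in> srts_star Srts \<and>
                              (\<nexists>s3. (s1, s2, s3) \<in> rl_S Rl)}"

abbreviation typ_S where "typ_S Ax Rl \<equiv> has_type (ax_S Ax) (rl_S Rl)"
abbreviation typ_star where "typ_star Srts Ax Rl \<equiv> has_type (ax_star Srts Ax) (rl_star Srts Rl)"
abbreviation wf_S where "wf_S Ax Rl \<equiv> wf_ctx (ax_S Ax) (rl_S Rl)"

text \<open>R is "the" reducibility predicate \<Gamma> \<Turnstile>_S M : A iff it satisfies the defining equation
  (the paper defines it by well-founded recursion, so such an R is unique).\<close>
definition is_reducibility ::
  "'s set \<Rightarrow> ('s \<times> 's) set \<Rightarrow> ('s \<times> 's \<times> 's) set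
   \<Rightarrow> ('s option trm list \<Rightarrow> 's option trm \<Rightarrow> 's option trm \<Rightarrow> bool) \<Rightarrow> bool" where
  "is_reducibility Srts Ax Rl R \<longleftrightarrow>
     (\<forall>\<Gamma> M A. R \<Gamma> M A \<longleftrightarrow>
        wf_S Ax Rl \<Gamma> \<and> typ_star Srts Ax Rl \<Gamma> M A \<and>
        (\<exists>s. typ_star Srts Ax Rl \<Gamma> A (Srt s) \<and>
           ((s \<noteq> None \<or> (\<exists>s'\<in>Srts. A = Srt (Some s'))) \<longrightarrow>
              (\<exists>M' A'. beta_star M M' \<and> beta_star A A' \<and> typ_S Ax Rl \<Gamma> M' A')) \<and>
           (\<forall>B C. s = None \<and> A = Pi B C \<longrightarrow>
              (\<forall>N. R \<Gamma> N B \<longrightarrow> R \<Gamma> (App M N) (subst C 0 N)))))"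

end

theory Submission
  imports Defs "HOL-Library.Confluence"
begin



declare subst.simps(2)[simp del]

lemma subst_eq [simp]: "subst (Var k) k u = u"
  by (simp add: subst.simps)
lemma subst_gt [simp]: "i < j \<Longrightarrow> subst (Var j) i u = Var (j - 1)"
  by (simp add: subst.simps)
lemma subst_lt [simp]: "j < i \<Longrightarrow> subst (Var j) i u = Var j"
  by (simp add: subst.simps)

lemma lift_lift:
    "i < k + 1 \<Longrightarrow> lift (Suc k) (lift i t) = lift i (lift k t)"
  by (induct t arbitrary: i k) auto

lemma lift_subst [simp]:
    "j < i + 1 \<Longrightarrow> lift i (subst t j s) = subst (lift (i + 1) t) j (lift i s)"
  by (induct t arbitrary: i j s)
    (auto simp add: subst.simps lift_lift)

lemma lift_subst_lt:
    "i < j + 1 \<Longrightarrow> lift i (subst t j s) = subst (lift i t) (j + 1) (lift i s)"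
  by (induct t arbitrary: i j s) (auto simp add: subst.simps lift_lift)

lemma subst_lift [simp]:
    "subst (lift k t) k s = t"
  by (induct t arbitrary: k s) simp_all

lemma subst_subst:
    "i < j + 1 \<Longrightarrow> subst (subst t (Suc j) (lift i v)) i (subst u j v) = subst (subst t i u) j v"
  by (induct t arbitrary: i j u v)
    (simp_all add: diff_Suc subst.simps lift_lift [symmetric] lift_subst_lt
      split: nat.split)

lemma subst_subst0:
    "subst (subst t (Suc j) (lift 0 v)) 0 (subst u j v) = subst (subst t 0 u) j v"
  using subst_subst[of 0 j] by simp

lemma lift0_subst: "lift 0 (subst t k s) = subst (lift 0 t) (Suc k) (lift 0 s)"
  using lift_subst_lt[of 0 k] by simp

lemma lift_subst0: "lift k (subst t 0 s) = subst (lift (Suc k) t) 0 (lift k s)"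
  using lift_subst[of 0 k] by simp

inductive_cases beta_cases [elim!]:
  "beta (Var i) t"
  "beta (Srt s) t"
  "beta (Lam A r) s"
  "beta (Pi A r) s"
  "beta (App s t) u"

lemma rtr_App: "beta_star s s' \<Longrightarrow> beta_star t t' \<Longrightarrow> beta_star (App s t) (App s' t')"
proof -
  assume a: "beta_star s s'" and b: "beta_star t t'"
  from a have "beta_star (App s t) (App s' t)"
    by induct (auto intro: rtranclp.rtrancl_into_rtrancl beta.intros)
  also from b have "beta_star (App s' t) (App s' t')"
    by induct (auto intro: rtranclp.rtrancl_into_rtrancl beta.intros)
  finally show ?thesis .
qed

lemma rtr_Lam: "beta_star s s' \<Longrightarrow> beta_star t t' \<Longrightarrow> beta_star (Lam s t) (Lam s' t')"
proof -
  assume a: "beta_star s s'" and b: "beta_star t t'"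
  from a have "beta_star (Lam s t) (Lam s' t)"
    by induct (auto intro: rtranclp.rtrancl_into_rtrancl beta.intros)
  also from b have "beta_star (Lam s' t) (Lam s' t')"
    by induct (auto intro: rtranclp.rtrancl_into_rtrancl beta.intros)
  finally show ?thesis .
qed

lemma rtr_Pi: "beta_star s s' \<Longrightarrow> beta_star t t' \<Longrightarrow> beta_star (Pi s t) (Pi s' t')"
proof -
  assume a: "beta_star s s'" and b: "beta_star t t'"
  from a have "beta_star (Pi s t) (Pi s' t)"
    by induct (auto intro: rtranclp.rtrancl_into_rtrancl beta.intros)
  also from b have "beta_star (Pi s' t) (Pi s' t')"
    by induct (auto intro: rtranclp.rtrancl_into_rtrancl beta.intros)
  finally show ?thesis .
qed

lemma subst_preserves_beta:
    "beta r s \<Longrightarrow> beta (subst r i t) (subst s i t)"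
  by (induct arbitrary: t i set: beta) (simp_all add: subst_subst0 [symmetric] beta.intros)

lemma subst_preserves_beta': "beta_star r s \<Longrightarrow> beta_star (subst r i t) (subst s i t)"
  by (induct set: rtranclp) (auto intro: rtranclp.rtrancl_into_rtrancl subst_preserves_beta)

lemma lift_preserves_beta:
    "beta r s \<Longrightarrow> beta (lift i r) (lift i s)"
  by (induct arbitrary: i set: beta) (auto simp: lift_subst0 intro: beta.intros)

lemma lift_preserves_beta': "beta_star r s \<Longrightarrow> beta_star (lift i r) (lift i s)"
  by (induct set: rtranclp) (auto intro: rtranclp.rtrancl_into_rtrancl lift_preserves_beta)

lemma subst_preserves_beta2: "beta r s \<Longrightarrow> beta_star (subst t i r) (subst t i s)"
  by (induct t arbitrary: r s i)
   (auto simp: subst.simps rtr_App rtr_Lam rtr_Pi lift_preserves_beta)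

lemma subst_preserves_beta2': "beta_star r s \<Longrightarrow> beta_star (subst t i r) (subst t i s)"
  by (induct set: rtranclp) (auto intro: rtranclp_trans subst_preserves_beta2)

lemma equiv_mono: assumes h: "\<And>x y. P x y \<Longrightarrow> equivclp beta (f x) (f y)" and e: "equivclp P a b"
  shows "equivclp beta (f a) (f b)"
  using e
proof (induct rule: equivclp_induct)
  case base then show ?case by simp
next
  case (step y z)
  then show ?case by (metis h equivclp_sym equivclp_trans)
qed

lemma beq_lift: "beta_eq a b \<Longrightarrow> beta_eq (lift k a) (lift k b)"
  by (rule equiv_mono[where P=beta]) (auto intro: lift_preserves_beta)

lemma beq_subst: "beta_eq a b \<Longrightarrow> beta_eq (subst a k N) (subst b k N)"
  by (rule equiv_mono[where P=beta]) (auto intro: subst_preserves_beta)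

lemma star_beq: "beta_star a b \<Longrightarrow> beta_eq a b"
  by (simp add: rtranclp_into_equivclp)

lemma beq_subst2: "beta r s \<Longrightarrow> beta_eq (subst t i r) (subst t i s)"
  by (simp add: star_beq subst_preserves_beta2)

lemma beq_Pi: "beta_eq a b \<Longrightarrow> beta_eq (Pi a c) (Pi b c)"
  by (rule equiv_mono[where P=beta]) (auto intro: beta.intros)

lemma beq_Pi2: "beta_eq a b \<Longrightarrow> beta_eq (Pi c a) (Pi c b)"
  by (rule equiv_mono[where P=beta]) (auto intro: beta.intros)

subsection \<open>Parallel reduction\<close>

inductive par :: "'s trm \<Rightarrow> 's trm \<Rightarrow> bool" where
  pvar [simp, intro!]: "par (Var n) (Var n)"
| psrt [simp, intro!]: "par (Srt n) (Srt n)"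
| plam [simp, intro!]: "par a a' \<Longrightarrow> par s t \<Longrightarrow> par (Lam a s) (Lam a' t)"
| ppi [simp, intro!]: "par a a' \<Longrightarrow> par s t \<Longrightarrow> par (Pi a s) (Pi a' t)"
| papp [simp, intro!]: "par s s' \<Longrightarrow> par t t' \<Longrightarrow> par (App s t) (App s' t')"
| pbeta [simp, intro!]: "par s s' \<Longrightarrow> par t t' \<Longrightarrow> par (App (Lam a s) t) (subst s' 0 t')"

inductive_cases par_cases [elim!]:
  "par (Var n) t"
  "par (Srt n) t"
  "par (Lam a s) t"
  "par (Pi a s) t"
  "par (App s t) u"

lemma par_refl [simp]: "par t t"
  by (induct t) simp_all

lemma beta_par: "beta s t \<Longrightarrow> par s t"
  by (induct set: beta) auto

lemma par_beta: "par s t \<Longrightarrow> beta_star s t"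
proof (induct set: par)
  case (pbeta s s' t t' a)
  have "beta_star (App (Lam a s) t) (App (Lam a s') t')"
    using pbeta by (simp add: rtr_App rtr_Lam)
  also have "beta (App (Lam a s') t') (subst s' 0 t')" by (rule beta.intros)
  finally show ?case .
qed (auto simp: rtr_App rtr_Lam rtr_Pi)

lemma par_lift [simp]:
    "par t t' \<Longrightarrow> par (lift n t) (lift n t')"
  by (induct arbitrary: n set: par) (auto simp: lift_subst0)

lemma par_subst:
    "par s s' \<Longrightarrow> par t t' \<Longrightarrow> par (subst t n s) (subst t' n s')"
proof (induct t arbitrary: s s' t' n)
  case (Var x) then show ?case by (auto simp: subst.simps)
next
  case (App t1 t2)
  from App.prems(2) show ?case
  proof (cases rule: par.cases)
    case (papp u1 u2) then show ?thesis using App by auto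
  next
    case pbeta
    then obtain b s1 u1 u2 where pb: "t1 = Lam b s1" "t' = subst u1 0 u2" "par s1 u1" "par t2 u2" by blast
    then have "par (subst (Lam b s1) n s) (subst (Lam b u1) n s')"
      using App.hyps(1)[of s s' "Lam b u1" n] App.prems(1) pb by auto
    then have "par (subst s1 (Suc n) (lift 0 s)) (subst u1 (Suc n) (lift 0 s'))" by auto
    moreover have "par (subst t2 n s) (subst u2 n s')" using App pb by auto
    ultimately show ?thesis using pb by (simp add: subst_subst0[symmetric])
  qed
qed auto

fun cd :: "'s trm \<Rightarrow> 's trm" where
  "cd (Var n) = Var n"
| "cd (Srt n) = Srt n"
| "cd (App (Lam a u) t) = subst (cd u) 0 (cd t)"
| "cd (App s t) = App (cd s) (cd t)"
| "cd (Lam a s) = Lam (cd a) (cd s)"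
| "cd (Pi a s) = Pi (cd a) (cd s)"

lemma par_cd: "par s t \<Longrightarrow> par t (cd s)"
  by (induct s arbitrary: t rule: cd.induct) (auto intro!: par_subst)

lemma par_confl: "confluentp par"
proof (rule strong_confluentp_imp_confluentp, rule strong_confluentpI)
  fix x y z assume "par x y" "par x z"
  then show "\<exists>u. par\<^sup>*\<^sup>* y u \<and> par\<^sup>=\<^sup>= z u"
    by (intro exI[of _ "cd x"]) (auto intro: par_cd)
qed

lemma par_star_eq: "par\<^sup>*\<^sup>* = beta_star"
proof (intro ext iffI)
  fix x y assume "par\<^sup>*\<^sup>* x y" then show "beta_star x y"
  proof induct
    case base then show ?case by simp
  next
    case (step y z)
    have "beta_star y z" using step(2) by (rule par_beta)
    with step(3) show ?case by (rule rtranclp_trans)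
  qed
next
  fix x y assume "beta_star x y" then show "par\<^sup>*\<^sup>* x y"
  proof induct
    case base then show ?case by simp
  next
    case (step y z)
    have "par y z" using step(2) by (rule beta_par)
    with step(3) show ?case by (rule rtranclp.rtrancl_into_rtrancl)
  qed
qed

lemma beta_confl: "confluentp beta"
proof (rule confluentpI)
  fix x y z assume "beta_star x y" "beta_star x z"
  then have "par\<^sup>*\<^sup>* x y" "par\<^sup>*\<^sup>* x z" by (simp_all add: par_star_eq)
  then obtain u where "par\<^sup>*\<^sup>* y u" "par\<^sup>*\<^sup>* z u" using confluentpD[OF par_confl] by blast
  then show "\<exists>u. beta_star y u \<and> beta_star z u" by (auto simp: par_star_eq)
qed

lemma CR: "beta_eq a b \<Longrightarrow> \<exists>c. beta_star a c \<and> beta_star b c"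
proof -
  assume h: "beta_eq a b"
  have "semiconfluentp beta" using beta_confl by (rule confluentp_imp_semiconfluentp)
  then have e: "equivclp beta = beta_star OO beta\<inverse>\<inverse>\<^sup>*\<^sup>*" by (rule semiconfluentp_equivclp)
  have "(beta_star OO beta\<inverse>\<inverse>\<^sup>*\<^sup>*) a b" by (rule e[THEN fun_cong, THEN fun_cong, THEN iffD1, OF h])
  then obtain c where "beta_star a c" "beta\<inverse>\<inverse>\<^sup>*\<^sup>* c b" by blast
  then have "beta_star b c" by (simp add: rtranclp_conversep)
  with \<open>beta_star a c\<close> show ?thesis by blast
qed

lemma star_Srt: "beta_star (Srt s) x \<Longrightarrow> x = Srt s"
  by (induct rule: rtranclp_induct) auto

lemma star_Pi: "beta_star (Pi a b) x \<Longrightarrow> \<exists>a' b'. x = Pi a' b' \<and> beta_star a a' \<and> beta_star b b'"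
  by (induct rule: rtranclp_induct) (auto intro: rtranclp.rtrancl_into_rtrancl)

lemma beq_Srt: "beta_eq (Srt s) (Srt t) \<Longrightarrow> s = t"
  by (auto dest!: CR star_Srt)

lemma beq_Srt_Pi: "\<not> beta_eq (Srt s) (Pi a b)"
  by (auto dest!: CR star_Srt star_Pi)

lemma beq_Pi_inj: "beta_eq (Pi a b) (Pi a' b') \<Longrightarrow> beta_eq a a' \<and> beta_eq b b'"
  apply (drule CR)
  apply clarify
  apply (drule star_Pi)+
  apply clarify
  apply (meson equivclp_sym equivclp_trans star_beq)
  done




inductive ins :: "('s \<times> 's) set \<Rightarrow> ('s \<times> 's \<times> 's) set \<Rightarrow> nat \<Rightarrow> 's trm list \<Rightarrow> 's trm list \<Rightarrow> bool"
  for Ax Rl where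
  ins0: "has_type Ax Rl \<Gamma> C (Srt s) \<Longrightarrow> ins Ax Rl 0 \<Gamma> (C # \<Gamma>)"
| insS: "ins Ax Rl k \<Gamma> \<Gamma>' \<Longrightarrow> ins Ax Rl (Suc k) (A # \<Gamma>) (lift k A # \<Gamma>')"

inductive_cases ins_SucE: "ins Ax Rl (Suc k) \<Gamma> \<Gamma>'"
inductive_cases ins_0E: "ins Ax Rl 0 \<Gamma> \<Gamma>'"

lemma weak0: "has_type Ax Rl \<Gamma> M T \<Longrightarrow> ins Ax Rl 0 \<Gamma> \<Gamma>' \<Longrightarrow> has_type Ax Rl \<Gamma>' (lift 0 M) (lift 0 T)"
  by (erule ins_0E) (auto intro: has_type.t_weak)

lemma weakening:
  "has_type Ax Rl \<Gamma> M T \<Longrightarrow> ins Ax Rl k \<Gamma> \<Gamma>' \<Longrightarrow> has_type Ax Rl \<Gamma>' (lift k M) (lift k T)"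
proof (induct arbitrary: k \<Gamma>' rule: has_type.induct)
  case (t_axiom s1 s2)
  then show ?case using weak0[OF has_type.t_axiom[OF t_axiom(1)]] by (cases k) (auto elim: ins_SucE)
next
  case (t_start \<Gamma> A s)
  show ?case
  proof (cases k)
    case 0 then show ?thesis using weak0[OF has_type.t_start[OF t_start.hyps(1)] t_start.prems[unfolded 0]] by simp
  next
    case (Suc k')
    with t_start.prems obtain \<Gamma>0' where g: "\<Gamma>' = lift k' A # \<Gamma>0'" "ins Ax Rl k' \<Gamma> \<Gamma>0'"
      by (auto elim: ins_SucE)
    with t_start.hyps(2) have "has_type Ax Rl \<Gamma>0' (lift k' A) (Srt s)" by fastforce
    then have "has_type Ax Rl \<Gamma>' (Var 0) (lift 0 (lift k' A))" using g by (simp add: has_type.t_start)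
    then show ?thesis using Suc by (simp add: lift_lift)
  qed
next
  case (t_weak \<Gamma> M B C s)
  show ?case
  proof (cases k)
    case 0 then show ?thesis using weak0[OF has_type.t_weak[OF t_weak.hyps(1) t_weak.hyps(3)] t_weak.prems[unfolded 0]] by simp
  next
    case (Suc k')
    with t_weak.prems obtain \<Gamma>0' where g: "\<Gamma>' = lift k' C # \<Gamma>0'" "ins Ax Rl k' \<Gamma> \<Gamma>0'"
      by (auto elim: ins_SucE)
    with t_weak.hyps have "has_type Ax Rl \<Gamma>0' (lift k' M) (lift k' B)" "has_type Ax Rl \<Gamma>0' (lift k' C) (Srt s)" by fastforce+
    then have "has_type Ax Rl \<Gamma>' (lift 0 (lift k' M)) (lift 0 (lift k' B))" using g by (simp add: has_type.t_weak)
    then show ?thesis using Suc by (simp add: lift_lift)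
  qed
next
  case (t_pi \<Gamma> A s1 B s2 s3)
  have "has_type Ax Rl (lift k A # \<Gamma>') (lift (Suc k) B) (Srt s2)"
    using t_pi.hyps(4)[OF ins.insS[OF t_pi.prems]] by simp
  moreover have "has_type Ax Rl \<Gamma>' (lift k A) (Srt s1)" using t_pi.hyps(2)[OF t_pi.prems] by simp
  ultimately show ?case using t_pi.hyps(5) by (auto intro!: has_type.t_pi)
next
  case (t_lam A \<Gamma> M B s)
  have "has_type Ax Rl (lift k A # \<Gamma>') (lift (Suc k) M) (lift (Suc k) B)"
    using t_lam.hyps(2)[OF ins.insS[OF t_lam.prems]] by simp
  moreover have "has_type Ax Rl \<Gamma>' (lift k (Pi A B)) (lift k (Srt s))" using t_lam by blast
  ultimately show ?case by (auto intro!: has_type.t_lam)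
next
  case (t_app \<Gamma> M A B N)
  then have "has_type Ax Rl \<Gamma>' (lift k M) (Pi (lift k A) (lift (Suc k) B))"
     "has_type Ax Rl \<Gamma>' (lift k N) (lift k A)" by fastforce+
  then show ?case by (auto simp: lift_subst0 intro: has_type.t_app)
next
  case (t_conv \<Gamma> M A B s)
  then show ?case by (fastforce intro: has_type.t_conv beq_lift)
qed

lemma weak_cons: "has_type Ax Rl \<Gamma> M T \<Longrightarrow> has_type Ax Rl \<Gamma> C (Srt s) \<Longrightarrow> has_type Ax Rl (C # \<Gamma>) (lift 0 M) (lift 0 T)"
  by (rule has_type.t_weak)

lemma weak_1: "has_type Ax Rl (A # \<Gamma>) M T \<Longrightarrow> has_type Ax Rl \<Gamma> C (Srt s) \<Longrightarrow>
   has_type Ax Rl (lift 0 A # C # \<Gamma>) (lift 1 M) (lift 1 T)"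
  by (rule weakening) (auto intro!: ins.intros)

inductive sb :: "('s \<times> 's) set \<Rightarrow> ('s \<times> 's \<times> 's) set \<Rightarrow> 's trm \<Rightarrow> nat \<Rightarrow> 's trm list \<Rightarrow> 's trm list \<Rightarrow> bool"
  for Ax Rl where
  sb0: "has_type Ax Rl \<Gamma> N B \<Longrightarrow> sb Ax Rl N 0 (B # \<Gamma>) \<Gamma>"
| sbS: "sb Ax Rl N k \<Gamma> \<Gamma>' \<Longrightarrow> sb Ax Rl (lift 0 N) (Suc k) (A # \<Gamma>) (subst A k N # \<Gamma>')"

inductive_cases sb_SucE: "sb Ax Rl N (Suc k) \<Gamma> \<Gamma>'"
inductive_cases sb_0E: "sb Ax Rl N 0 \<Gamma> \<Gamma>'"
inductive_cases sb_NilE: "sb Ax Rl N k [] \<Gamma>'"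

lemma substitution:
  "has_type Ax Rl \<Gamma> M T \<Longrightarrow> sb Ax Rl N k \<Gamma> \<Gamma>' \<Longrightarrow> has_type Ax Rl \<Gamma>' (subst M k N) (subst T k N)"
proof (induct arbitrary: N k \<Gamma>' rule: has_type.induct)
  case (t_axiom s1 s2)
  then show ?case by (auto elim: sb_NilE)
next
  case (t_start \<Gamma> A s)
  show ?case
  proof (cases k)
    case 0 then show ?thesis using t_start by (auto elim: sb_0E)
  next
    case (Suc k')
    with t_start.prems obtain \<Gamma>0' N0 where g: "\<Gamma>' = subst A k' N0 # \<Gamma>0'" "sb Ax Rl N0 k' \<Gamma> \<Gamma>0'" "N = lift 0 N0"
      by (auto elim: sb_SucE)
    with t_start.hyps(2) have "has_type Ax Rl \<Gamma>0' (subst A k' N0) (Srt s)" by fastforce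
    then have "has_type Ax Rl \<Gamma>' (Var 0) (lift 0 (subst A k' N0))" using g by (simp add: has_type.t_start)
    then show ?thesis using Suc g by (simp add: lift0_subst)
  qed
next
  case (t_weak \<Gamma> M B C s)
  show ?case
  proof (cases k)
    case 0 then show ?thesis using t_weak by (auto elim: sb_0E)
  next
    case (Suc k')
    with t_weak.prems obtain \<Gamma>0' N0 where g: "\<Gamma>' = subst C k' N0 # \<Gamma>0'" "sb Ax Rl N0 k' \<Gamma> \<Gamma>0'" "N = lift 0 N0"
      by (auto elim: sb_SucE)
    with t_weak.hyps have "has_type Ax Rl \<Gamma>0' (subst M k' N0) (subst B k' N0)" "has_type Ax Rl \<Gamma>0' (subst C k' N0) (Srt s)" by fastforce+
    then have "has_type Ax Rl \<Gamma>' (lift 0 (subst M k' N0)) (lift 0 (subst B k' N0))" using g by (simp add: has_type.t_weak)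
    then show ?thesis using Suc g by (simp add: lift0_subst)
  qed
next
  case (t_pi \<Gamma> A s1 B s2 s3)
  have "has_type Ax Rl (subst A k N # \<Gamma>') (subst B (Suc k) (lift 0 N)) (Srt s2)"
    using t_pi.hyps(4)[OF sb.sbS[OF t_pi.prems]] by simp
  moreover have "has_type Ax Rl \<Gamma>' (subst A k N) (Srt s1)" using t_pi.hyps(2)[OF t_pi.prems] by simp
  ultimately show ?case using t_pi.hyps(5) by (auto intro!: has_type.t_pi)
next
  case (t_lam A \<Gamma> M B s)
  have "has_type Ax Rl (subst A k N # \<Gamma>') (subst M (Suc k) (lift 0 N)) (subst B (Suc k) (lift 0 N))"
    using t_lam.hyps(2)[OF sb.sbS[OF t_lam.prems]] by simp
  moreover have "has_type Ax Rl \<Gamma>' (subst (Pi A B) k N) (subst (Srt s) k N)" using t_lam by blast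
  ultimately show ?case by (auto intro!: has_type.t_lam)
next
  case (t_app \<Gamma> M A B N')
  then have "has_type Ax Rl \<Gamma>' (subst M k N) (Pi (subst A k N) (subst B (Suc k) (lift 0 N)))"
     "has_type Ax Rl \<Gamma>' (subst N' k N) (subst A k N)" by fastforce+
  then show ?case by (auto simp: subst_subst0[symmetric] intro: has_type.t_app)
next
  case (t_conv \<Gamma> M A B s)
  then show ?case by (fastforce intro: has_type.t_conv beq_subst)
qed

lemma subst0_typ: "has_type Ax Rl (B # \<Gamma>) M T \<Longrightarrow> has_type Ax Rl \<Gamma> N B \<Longrightarrow> has_type Ax Rl \<Gamma> (subst M 0 N) (subst T 0 N)"
  by (erule substitution) (rule sb0)




fun liftn :: "nat \<Rightarrow> 's trm \<Rightarrow> 's trm" where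
  "liftn 0 t = t"
| "liftn (Suc n) t = lift 0 (liftn n t)"

lemma lift_eq_Pi: "lift k X = Pi A B \<Longrightarrow> \<exists>A0 B0. X = Pi A0 B0 \<and> A = lift k A0 \<and> B = lift (Suc k) B0"
  by (cases X) (auto split: if_splits)
lemma lift_eq_Lam: "lift k X = Lam A B \<Longrightarrow> \<exists>A0 B0. X = Lam A0 B0 \<and> A = lift k A0 \<and> B = lift (Suc k) B0"
  by (cases X) (auto split: if_splits)
lemma lift_eq_App: "lift k X = App A B \<Longrightarrow> \<exists>A0 B0. X = App A0 B0 \<and> A = lift k A0 \<and> B = lift k B0"
  by (cases X) (auto split: if_splits)
lemma lift_eq_Srt: "lift k X = Srt s \<Longrightarrow> X = Srt s"
  by (cases X) (auto split: if_splits)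
lemma lift0_eq_Var: "lift 0 X = Var i \<Longrightarrow> \<exists>j. X = Var j \<and> i = Suc j"
  by (cases X) (auto split: if_splits)

lemma beq_trans: "beta_eq a b \<Longrightarrow> beta_eq b c \<Longrightarrow> beta_eq a c"
  by (rule equivclp_trans)
lemma beq_sym: "beta_eq a b \<Longrightarrow> beta_eq b a"
  by (rule equivclp_sym)

lemma conv_help: "beta_eq A B \<Longrightarrow> beta_eq A L \<Longrightarrow> beta_eq B L"
  by (rule beq_trans[OF beq_sym])

lemma gen_var: "has_type Ax Rl \<Gamma> M T \<Longrightarrow> M = Var i \<Longrightarrow>
   i < length \<Gamma> \<and> beta_eq T (liftn (Suc i) (\<Gamma>!i)) \<and> (\<exists>s. has_type Ax Rl \<Gamma> (liftn (Suc i) (\<Gamma>!i)) (Srt s))"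
proof (induct arbitrary: i rule: has_type.induct)
  case (t_start \<Gamma> A s)
  have "has_type Ax Rl (A # \<Gamma>) (lift 0 A) (lift 0 (Srt s))"
    using t_start.hyps(1) by (rule has_type.t_weak) (rule t_start.hyps(1))
  then have "has_type Ax Rl (A # \<Gamma>) (lift 0 A) (Srt s)" by simp
  then have ex: "\<exists>s. has_type Ax Rl (A # \<Gamma>) (lift 0 A) (Srt s)" by (rule exI)
  have "i = 0" using t_start.prems by simp
  then show ?case using ex by simp
next
  case (t_weak \<Gamma> M B C s)
  from t_weak.prems obtain j where j: "M = Var j" "i = Suc j" using lift0_eq_Var by blast
  have ih: "j < length \<Gamma> \<and> beta_eq B (liftn (Suc j) (\<Gamma>!j)) \<and> (\<exists>s. has_type Ax Rl \<Gamma> (liftn (Suc j) (\<Gamma>!j)) (Srt s))"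
    using t_weak.hyps(2)[OF j(1)] .
  then obtain s' where h: "j < length \<Gamma>" "beta_eq B (liftn (Suc j) (\<Gamma>!j))"
    "has_type Ax Rl \<Gamma> (liftn (Suc j) (\<Gamma>!j)) (Srt s')" by blast
  have t1: "has_type Ax Rl (C # \<Gamma>) (lift 0 (liftn (Suc j) (\<Gamma>!j))) (lift 0 (Srt s'))"
    using h(3) t_weak.hyps(3) by (rule has_type.t_weak)
  have t2: "beta_eq (lift 0 B) (lift 0 (liftn (Suc j) (\<Gamma>!j)))" using h(2) by (rule beq_lift)
  have e: "liftn (Suc i) ((C # \<Gamma>) ! i) = lift 0 (liftn (Suc j) (\<Gamma>!j))" using j(2) by simp
  have t1': "has_type Ax Rl (C # \<Gamma>) (lift 0 (liftn (Suc j) (\<Gamma>!j))) (Srt s')" using t1 by simp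
  have l: "i < length (C # \<Gamma>)" using h(1) j(2) by simp
  have t1'': "has_type Ax Rl (C # \<Gamma>) (liftn (Suc i) ((C # \<Gamma>) ! i)) (Srt s')" using t1' by (subst e)
  have t2': "beta_eq (lift 0 B) (liftn (Suc i) ((C # \<Gamma>) ! i))" using t2 by (subst e)
  show ?case
  proof (intro conjI)
    show "\<exists>s. has_type Ax Rl (C # \<Gamma>) (liftn (Suc i) ((C # \<Gamma>) ! i)) (Srt s)" using t1'' by (rule exI)
  qed (rule l, rule t2')
next
  case (t_conv \<Gamma> M A B s)
  then show ?case using conv_help[OF t_conv.hyps(5)] by blast
qed simp_all

lemma gen_srt: "has_type Ax Rl \<Gamma> M T \<Longrightarrow> M = Srt s \<Longrightarrow> \<exists>s'. (s, s') \<in> Ax \<and> beta_eq T (Srt s')"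
proof (induct rule: has_type.induct)
  case (t_axiom s1 s2)
  then have "(s, s2) \<in> Ax \<and> beta_eq (Srt s2) (Srt s2)" by simp
  then show ?case by (rule exI)
next
  case (t_weak \<Gamma> M B C s0)
  then have "M = Srt s" by (simp add: lift_eq_Srt)
  then obtain s' where h: "(s, s') \<in> Ax" "beta_eq B (Srt s')" using t_weak.hyps(2) by blast
  have "beta_eq (lift 0 B) (lift 0 (Srt s'))" using h(2) by (rule beq_lift)
  then have "(s, s') \<in> Ax \<and> beta_eq (lift 0 B) (Srt s')" using h(1) by simp
  then show ?case by (rule exI)
next
  case (t_conv \<Gamma> M A B s)
  then show ?case using conv_help[OF t_conv.hyps(5)] by blast
qed simp_all

lemma gen_pi: "has_type Ax Rl \<Gamma> M T \<Longrightarrow> M = Pi A B \<Longrightarrow>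
  \<exists>s1 s2 s3. has_type Ax Rl \<Gamma> A (Srt s1) \<and> has_type Ax Rl (A # \<Gamma>) B (Srt s2) \<and> (s1, s2, s3) \<in> Rl \<and> beta_eq T (Srt s3)"
proof (induct arbitrary: A B rule: has_type.induct)
  case (t_pi \<Gamma> A0 s1 B0 s2 s3)
  then have "A0 = A" "B0 = B" by simp_all
  then have "has_type Ax Rl \<Gamma> A (Srt s1) \<and> has_type Ax Rl (A # \<Gamma>) B (Srt s2) \<and> (s1, s2, s3) \<in> Rl \<and> beta_eq (Srt s3) (Srt s3)"
    using t_pi.hyps(1,3,5) by simp
  then show ?case by blast
next
  case (t_weak \<Gamma> M B0 C s)
  then obtain A1 B1 where e: "M = Pi A1 B1" "A = lift 0 A1" "B = lift 1 B1" by (auto dest: lift_eq_Pi)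
  with t_weak.hyps(2) obtain s1 s2 s3 where h: "has_type Ax Rl \<Gamma> A1 (Srt s1)" "has_type Ax Rl (A1 # \<Gamma>) B1 (Srt s2)"
    "(s1, s2, s3) \<in> Rl" "beta_eq B0 (Srt s3)" by blast
  have "has_type Ax Rl (C # \<Gamma>) (lift 0 A1) (lift 0 (Srt s1))" using h(1) t_weak.hyps(3) by (rule has_type.t_weak)
  moreover have "has_type Ax Rl (lift 0 A1 # C # \<Gamma>) (lift 1 B1) (lift 1 (Srt s2))"
    using h(2) t_weak.hyps(3) by (rule weak_1)
  moreover have "beta_eq (lift 0 B0) (lift 0 (Srt s3))" using h(4) by (rule beq_lift)
  ultimately have "has_type Ax Rl (C # \<Gamma>) A (Srt s1) \<and> has_type Ax Rl (A # C # \<Gamma>) B (Srt s2) \<and> (s1, s2, s3) \<in> Rl \<and> beta_eq (lift 0 B0) (Srt s3)"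
    using e h(3) by simp
  then show ?case by blast
next
  case (t_conv \<Gamma> M A B s)
  then show ?case using conv_help[OF t_conv.hyps(5)] by blast
qed simp_all

lemma gen_lam: "has_type Ax Rl \<Gamma> M T \<Longrightarrow> M = Lam A N \<Longrightarrow>
  \<exists>B s. has_type Ax Rl (A # \<Gamma>) N B \<and> has_type Ax Rl \<Gamma> (Pi A B) (Srt s) \<and> beta_eq T (Pi A B)"
proof (induct arbitrary: A N rule: has_type.induct)
  case (t_lam A0 \<Gamma> M B s)
  then have "A0 = A" "M = N" by simp_all
  then have "has_type Ax Rl (A # \<Gamma>) N B \<and> has_type Ax Rl \<Gamma> (Pi A B) (Srt s) \<and> beta_eq (Pi A0 B) (Pi A B)"
    using t_lam.hyps(1,3) by simp
  then show ?case by blast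
next
  case (t_weak \<Gamma> M B0 C s)
  then obtain A1 N1 where e: "M = Lam A1 N1" "A = lift 0 A1" "N = lift 1 N1" by (auto dest: lift_eq_Lam)
  with t_weak.hyps(2) obtain B s' where h: "has_type Ax Rl (A1 # \<Gamma>) N1 B" "has_type Ax Rl \<Gamma> (Pi A1 B) (Srt s')"
    "beta_eq B0 (Pi A1 B)" by blast
  have "has_type Ax Rl (lift 0 A1 # C # \<Gamma>) (lift 1 N1) (lift 1 B)"
    using h(1) t_weak.hyps(3) by (rule weak_1)
  moreover have "has_type Ax Rl (C # \<Gamma>) (lift 0 (Pi A1 B)) (lift 0 (Srt s'))" using h(2) t_weak.hyps(3) by (rule has_type.t_weak)
  moreover have "beta_eq (lift 0 B0) (lift 0 (Pi A1 B))" using h(3) by (rule beq_lift)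
  ultimately have "has_type Ax Rl (A # C # \<Gamma>) N (lift 1 B) \<and> has_type Ax Rl (C # \<Gamma>) (Pi A (lift 1 B)) (Srt s') \<and> beta_eq (lift 0 B0) (Pi A (lift 1 B))"
    using e by simp
  then show ?case by blast
next
  case (t_conv \<Gamma> M A B s)
  then show ?case using conv_help[OF t_conv.hyps(5)] by blast
qed simp_all

lemma gen_app: "has_type Ax Rl \<Gamma> M T \<Longrightarrow> M = App P N \<Longrightarrow>
  \<exists>A B. has_type Ax Rl \<Gamma> P (Pi A B) \<and> has_type Ax Rl \<Gamma> N A \<and> beta_eq T (subst B 0 N)"
proof (induct arbitrary: P N rule: has_type.induct)
  case (t_app \<Gamma> M A B N0)
  then have "M = P" "N0 = N" by simp_all
  then have "has_type Ax Rl \<Gamma> P (Pi A B) \<and> has_type Ax Rl \<Gamma> N A \<and> beta_eq (subst B 0 N0) (subst B 0 N)"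
    using t_app.hyps(1,3) by simp
  then show ?case by blast
next
  case (t_weak \<Gamma> M B0 C s)
  then obtain P1 N1 where e: "M = App P1 N1" "P = lift 0 P1" "N = lift 0 N1" by (auto dest: lift_eq_App)
  with t_weak.hyps(2) obtain A B where h: "has_type Ax Rl \<Gamma> P1 (Pi A B)" "has_type Ax Rl \<Gamma> N1 A"
    "beta_eq B0 (subst B 0 N1)" by blast
  have "has_type Ax Rl (C # \<Gamma>) (lift 0 P1) (lift 0 (Pi A B))" using h(1) t_weak.hyps(3) by (rule has_type.t_weak)
  moreover have "has_type Ax Rl (C # \<Gamma>) (lift 0 N1) (lift 0 A)" using h(2) t_weak.hyps(3) by (rule has_type.t_weak)
  moreover have "beta_eq (lift 0 B0) (lift 0 (subst B 0 N1))" using h(3) by (rule beq_lift)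
  ultimately have "has_type Ax Rl (C # \<Gamma>) P (Pi (lift 0 A) (lift 1 B)) \<and> has_type Ax Rl (C # \<Gamma>) N (lift 0 A) \<and> beta_eq (lift 0 B0) (subst (lift 1 B) 0 N)"
    using e by (simp add: lift_subst0)
  then show ?case by blast
next
  case (t_conv \<Gamma> M A B s)
  then show ?case using conv_help[OF t_conv.hyps(5)] by blast
qed simp_all

lemma type_correct: "has_type Ax Rl \<Gamma> M T \<Longrightarrow> (\<exists>s. T = Srt s) \<or> (\<exists>s. has_type Ax Rl \<Gamma> T (Srt s))"
proof (induct rule: has_type.induct)
  case (t_start \<Gamma> A s)
  have "has_type Ax Rl (A # \<Gamma>) (lift 0 A) (lift 0 (Srt s))"
    using t_start.hyps(1) by (rule has_type.t_weak) (rule t_start.hyps(1))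
  then have "has_type Ax Rl (A # \<Gamma>) (lift 0 A) (Srt s)" by simp
  then show ?case by blast
next
  case (t_weak \<Gamma> M B C s)
  from t_weak.hyps(2) show ?case
  proof
    assume "\<exists>s. B = Srt s" then show ?case by auto
  next
    assume "\<exists>s. has_type Ax Rl \<Gamma> B (Srt s)"
    then obtain s' where "has_type Ax Rl \<Gamma> B (Srt s')" by blast
    then have "has_type Ax Rl (C # \<Gamma>) (lift 0 B) (lift 0 (Srt s'))" using t_weak.hyps(3) by (rule has_type.t_weak)
    then have "has_type Ax Rl (C # \<Gamma>) (lift 0 B) (Srt s')" by simp
    then show ?case by blast
  qed
next
  case (t_lam A \<Gamma> M B s)
  then show ?case by blast
next
  case (t_app \<Gamma> M A B N)
  from t_app.hyps(2) obtain s where "has_type Ax Rl \<Gamma> (Pi A B) (Srt s)" by auto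
  then obtain s1 s2 s3 where "has_type Ax Rl (A # \<Gamma>) B (Srt s2)" using gen_pi by blast
  then have "has_type Ax Rl \<Gamma> (subst B 0 N) (subst (Srt s2) 0 N)" using t_app.hyps(3) by (rule subst0_typ)
  then have "has_type Ax Rl \<Gamma> (subst B 0 N) (Srt s2)" by simp
  then show ?case by blast
next
  case (t_conv \<Gamma> M A B s)
  then show ?case by blast
qed simp_all

inductive ctxr :: "'s trm list \<Rightarrow> 's trm list \<Rightarrow> bool" where
  ctx_hd: "beta A A' \<Longrightarrow> ctxr (A # \<Gamma>) (A' # \<Gamma>)"
| ctx_tl: "ctxr \<Gamma> \<Gamma>' \<Longrightarrow> ctxr (A # \<Gamma>) (A # \<Gamma>')"

inductive_cases ctxr_consE: "ctxr (A # \<Gamma>) \<Delta>"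
inductive_cases ctxr_nilE: "ctxr [] \<Delta>"

lemma beta_lift_inv: "beta (lift k M) N \<Longrightarrow> \<exists>M'. N = lift k M' \<and> beta M M'"
proof (induct M arbitrary: k N)
  case (Var x) then show ?case by (auto split: if_splits)
next
  case (Srt x) then show ?case by auto
next
  case (App M1 M2)
  from App.prems show ?case
  proof (cases rule: beta.cases)
    case (beta_redex A M0 N0)
    then obtain A1 M1' where "M1 = Lam A1 M1'" "A = lift k A1" "M0 = lift (Suc k) M1'"
      by (auto dest: lift_eq_Lam)
    moreover have "N0 = lift k M2" using beta_redex by simp
    ultimately have "N = lift k (subst M1' 0 M2)" using beta_redex by (simp add: lift_subst0)
    moreover have "beta (App M1 M2) (subst M1' 0 M2)" using \<open>M1 = Lam A1 M1'\<close> by (simp add: beta.beta_redex)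
    ultimately show ?thesis by (intro exI[where x="subst M1' 0 M2"] conjI)
  next
    case (beta_appL M' M'' N0)
    then obtain M1' where "M'' = lift k M1'" "beta M1 M1'" using App.hyps(1) by auto
    then show ?thesis using beta_appL by (intro exI[where x="App M1' M2"]) (auto intro: beta.beta_appL)
  next
    case (beta_appR N0 N' M0)
    then obtain M2' where "N' = lift k M2'" "beta M2 M2'" using App.hyps(2) by auto
    then show ?thesis using beta_appR by (intro exI[where x="App M1 M2'"]) (auto intro: beta.beta_appR)
  qed simp_all
next
  case (Lam M1 M2)
  from Lam.prems show ?case
  proof (cases rule: beta.cases)
    case (beta_lamL A A' M0)
    then obtain M1' where "A' = lift k M1'" "beta M1 M1'" using Lam.hyps(1) by auto
    then show ?thesis using beta_lamL by (intro exI[where x="Lam M1' M2"]) (auto intro: beta.beta_lamL)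
  next
    case (beta_lamR M0 M' A)
    then obtain M2' where "M' = lift (Suc k) M2'" "beta M2 M2'" using Lam.hyps(2) by auto
    then show ?thesis using beta_lamR by (intro exI[where x="Lam M1 M2'"]) (auto intro: beta.beta_lamR)
  qed simp_all
next
  case (Pi M1 M2)
  from Pi.prems show ?case
  proof (cases rule: beta.cases)
    case (beta_piL A A' M0)
    then obtain M1' where "A' = lift k M1'" "beta M1 M1'" using Pi.hyps(1) by auto
    then show ?thesis using beta_piL by (intro exI[where x="Pi M1' M2"]) (auto intro: beta.beta_piL)
  next
    case (beta_piR M0 M' A)
    then obtain M2' where "M' = lift (Suc k) M2'" "beta M2 M2'" using Pi.hyps(2) by auto
    then show ?thesis using beta_piR by (intro exI[where x="Pi M1 M2'"]) (auto intro: beta.beta_piR)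
  qed simp_all
qed




lemma ctxr_cons: "ctxr (A # \<Gamma>) \<Delta> \<Longrightarrow> (\<exists>A'. beta A A' \<and> \<Delta> = A' # \<Gamma>) \<or> (\<exists>\<Gamma>'. ctxr \<Gamma> \<Gamma>' \<and> \<Delta> = A # \<Gamma>')"
  by (cases rule: ctxr.cases) auto

lemma beta_Pi_inv: "beta (Pi A B) X \<Longrightarrow> (\<exists>A'. beta A A' \<and> X = Pi A' B) \<or> (\<exists>B'. beta B B' \<and> X = Pi A B')"
  by (erule beta_cases) auto
lemma beta_Lam_inv: "beta (Lam A B) X \<Longrightarrow> (\<exists>A'. beta A A' \<and> X = Lam A' B) \<or> (\<exists>B'. beta B B' \<and> X = Lam A B')"
  by (erule beta_cases) auto
lemma beta_App_inv: "beta (App M N) X \<Longrightarrow> (\<exists>A0 M0. M = Lam A0 M0 \<and> X = subst M0 0 N) \<or>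
   (\<exists>M'. beta M M' \<and> X = App M' N) \<or> (\<exists>N'. beta N N' \<and> X = App M N')"
  by (erule beta_cases) auto

lemma SR_gen: "has_type Ax Rl \<Gamma> M T \<Longrightarrow>
  (\<forall>M'. beta M M' \<longrightarrow> has_type Ax Rl \<Gamma> M' T) \<and> (\<forall>\<Gamma>'. ctxr \<Gamma> \<Gamma>' \<longrightarrow> has_type Ax Rl \<Gamma>' M T)"
proof (induct rule: has_type.induct)
  case (t_axiom s1 s2)
  then show ?case by (auto elim: ctxr_nilE)
next
  case (t_start \<Gamma> A s)
  have p2: "has_type Ax Rl \<Delta> (Var 0) (lift 0 A)" if c: "ctxr (A # \<Gamma>) \<Delta>" for \<Delta>
    using ctxr_cons[OF c]
  proof
    assume "\<exists>A'. beta A A' \<and> \<Delta> = A' # \<Gamma>"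
    then obtain A' where 1: "\<Delta> = A' # \<Gamma>" "beta A A'" by blast
    have a': "has_type Ax Rl \<Gamma> A' (Srt s)" using t_start.hyps(2) 1(2) by blast
    have v: "has_type Ax Rl (A' # \<Gamma>) (Var 0) (lift 0 A')" using a' by (rule has_type.t_start)
    have w: "has_type Ax Rl (A' # \<Gamma>) (lift 0 A) (lift 0 (Srt s))" using t_start.hyps(1) a' by (rule has_type.t_weak)
    have e: "beta_eq (lift 0 A') (lift 0 A)" using lift_preserves_beta[OF 1(2), of 0] by (rule converse_r_into_equivclp)
    have w': "has_type Ax Rl (A' # \<Gamma>) (lift 0 A) (Srt s)" using w by simp
    have "has_type Ax Rl (A' # \<Gamma>) (Var 0) (lift 0 A)" by (rule has_type.t_conv[OF v w' e])
    then show ?thesis using 1 by simp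
  next
    assume "\<exists>\<Gamma>'. ctxr \<Gamma> \<Gamma>' \<and> \<Delta> = A # \<Gamma>'"
    then obtain \<Gamma>' where 2: "\<Delta> = A # \<Gamma>'" "ctxr \<Gamma> \<Gamma>'" by blast
    have "has_type Ax Rl \<Gamma>' A (Srt s)" using t_start.hyps(2) 2(2) by blast
    then show ?thesis unfolding 2(1) by (rule has_type.t_start)
  qed
  show ?case using p2 by auto
next
  case (t_weak \<Gamma> M B C s)
  have p1: "has_type Ax Rl (C # \<Gamma>) M'' (lift 0 B)" if b: "beta (lift 0 M) M''" for M''
  proof -
    obtain M0 where m: "M'' = lift 0 M0" "beta M M0" using beta_lift_inv[OF b] by blast
    have "has_type Ax Rl \<Gamma> M0 B" using t_weak.hyps(2) m(2) by blast
    then show ?thesis unfolding m(1) using t_weak.hyps(3) by (rule has_type.t_weak)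
  qed
  have p2: "has_type Ax Rl \<Delta> (lift 0 M) (lift 0 B)" if c: "ctxr (C # \<Gamma>) \<Delta>" for \<Delta>
    using ctxr_cons[OF c]
  proof
    assume "\<exists>A'. beta C A' \<and> \<Delta> = A' # \<Gamma>"
    then obtain C' where 1: "\<Delta> = C' # \<Gamma>" "beta C C'" by blast
    have "has_type Ax Rl \<Gamma> C' (Srt s)" using t_weak.hyps(4) 1(2) by blast
    then show ?thesis unfolding 1(1) by (rule has_type.t_weak[OF t_weak.hyps(1)])
  next
    assume "\<exists>\<Gamma>'. ctxr \<Gamma> \<Gamma>' \<and> \<Delta> = C # \<Gamma>'"
    then obtain \<Gamma>' where 2: "\<Delta> = C # \<Gamma>'" "ctxr \<Gamma> \<Gamma>'" by blast
    have "has_type Ax Rl \<Gamma>' C (Srt s)" "has_type Ax Rl \<Gamma>' M B" using t_weak.hyps(2,4) 2(2) by blast+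
    then show ?thesis unfolding 2(1) by (rule has_type.t_weak[rotated])
  qed
  show ?case using p1 p2 by blast
next
  case (t_pi \<Gamma> A s1 B s2 s3)
  have p1: "has_type Ax Rl \<Gamma> X (Srt s3)" if b: "beta (Pi A B) X" for X
    using beta_Pi_inv[OF b]
  proof
    assume "\<exists>A'. beta A A' \<and> X = Pi A' B"
    then obtain A' where beta_piL: "beta A A'" "X = Pi A' B" by blast
    have "has_type Ax Rl \<Gamma> A' (Srt s1)" using t_pi.hyps(2) beta_piL by blast
    moreover have "has_type Ax Rl (A' # \<Gamma>) B (Srt s2)" using t_pi.hyps(4) beta_piL ctxr.ctx_hd[of A A' \<Gamma>] by blast
    ultimately have "has_type Ax Rl \<Gamma> (Pi A' B) (Srt s3)" using t_pi.hyps(5) by (rule has_type.t_pi)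
    then show ?thesis using beta_piL by simp
  next
    assume "\<exists>B'. beta B B' \<and> X = Pi A B'"
    then obtain B' where beta_piR: "beta B B'" "X = Pi A B'" by blast
    have "has_type Ax Rl (A # \<Gamma>) B' (Srt s2)" using t_pi.hyps(4) beta_piR by blast
    then have "has_type Ax Rl \<Gamma> (Pi A B') (Srt s3)" by (rule has_type.t_pi[OF t_pi.hyps(1) _ t_pi.hyps(5)])
    then show ?thesis using beta_piR by simp
  qed
  have p2: "has_type Ax Rl \<Gamma>' (Pi A B) (Srt s3)" if c: "ctxr \<Gamma> \<Gamma>'" for \<Gamma>'
  proof -
    have "has_type Ax Rl \<Gamma>' A (Srt s1)" using t_pi.hyps(2) c by blast
    moreover have "has_type Ax Rl (A # \<Gamma>') B (Srt s2)" using t_pi.hyps(4) ctxr.ctx_tl[OF c, of A] by blast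
    ultimately show ?thesis using t_pi.hyps(5) by (rule has_type.t_pi)
  qed
  show ?case using p1 p2 by blast
next
  case (t_lam A \<Gamma> M B s)
  have p1: "has_type Ax Rl \<Gamma> X (Pi A B)" if b: "beta (Lam A M) X" for X
    using beta_Lam_inv[OF b]
  proof
    assume "\<exists>A'. beta A A' \<and> X = Lam A' M"
    then obtain A' where beta_lamL: "beta A A'" "X = Lam A' M" by blast
    have m: "has_type Ax Rl (A' # \<Gamma>) M B" using t_lam.hyps(2) beta_lamL ctxr.ctx_hd[of A A' \<Gamma>] by blast
    have pb: "beta (Pi A B) (Pi A' B)" using beta_lamL by (simp add: beta.beta_piL)
    have p: "has_type Ax Rl \<Gamma> (Pi A' B) (Srt s)" using conjunct1[OF t_lam.hyps(4), rule_format, OF pb] .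
    have l: "has_type Ax Rl \<Gamma> (Lam A' M) (Pi A' B)" using m p by (rule has_type.t_lam)
    have e: "beta_eq (Pi A' B) (Pi A B)" using pb by (rule converse_r_into_equivclp)
    have "has_type Ax Rl \<Gamma> (Lam A' M) (Pi A B)" using l t_lam.hyps(3) e by (rule has_type.t_conv)
    then show ?thesis using beta_lamL by simp
  next
    assume "\<exists>B'. beta M B' \<and> X = Lam A B'"
    then obtain M' where beta_lamR: "beta M M'" "X = Lam A M'" by blast
    have "has_type Ax Rl (A # \<Gamma>) M' B" using t_lam.hyps(2) beta_lamR by blast
    then have "has_type Ax Rl \<Gamma> (Lam A M') (Pi A B)" using t_lam.hyps(3) by (rule has_type.t_lam)
    then show ?thesis using beta_lamR by simp
  qed
  have p2: "has_type Ax Rl \<Gamma>' (Lam A M) (Pi A B)" if c: "ctxr \<Gamma> \<Gamma>'" for \<Gamma>'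
  proof -
    have "has_type Ax Rl \<Gamma>' (Pi A B) (Srt s)" using t_lam.hyps(4) c by blast
    moreover have "has_type Ax Rl (A # \<Gamma>') M B" using t_lam.hyps(2) ctxr.ctx_tl[OF c, of A] by blast
    ultimately show ?thesis by (rule has_type.t_lam[rotated])
  qed
  show ?case using p1 p2 by blast
next
  case (t_app \<Gamma> M A B N)
  have "(\<exists>s. Pi A B = Srt s) \<or> (\<exists>s. has_type Ax Rl \<Gamma> (Pi A B) (Srt s))" using t_app.hyps(1) by (rule type_correct)
  then obtain sp where "has_type Ax Rl \<Gamma> (Pi A B) (Srt sp)" by auto
  then obtain s1 s2 s3 where bt: "has_type Ax Rl (A # \<Gamma>) B (Srt s2)" using gen_pi by blast
  have sbt: "has_type Ax Rl \<Gamma> (subst B 0 N) (Srt s2)" using subst0_typ[OF bt t_app.hyps(3)] by simp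
  have p1: "has_type Ax Rl \<Gamma> X (subst B 0 N)" if b: "beta (App M N) X" for X
    using beta_App_inv[OF b]
  proof (elim disjE)
    assume "\<exists>A0 M0. M = Lam A0 M0 \<and> X = subst M0 0 N"
    then obtain A0 M0 where beta_redex: "M = Lam A0 M0" "X = subst M0 0 N" by blast
    have ml: "has_type Ax Rl \<Gamma> (Lam A0 M0) (Pi A B)" using t_app.hyps(1) beta_redex by simp
    obtain B0 s' where g: "has_type Ax Rl (A0 # \<Gamma>) M0 B0" "has_type Ax Rl \<Gamma> (Pi A0 B0) (Srt s')"
      "beta_eq (Pi A B) (Pi A0 B0)" using gen_lam[OF ml] by blast
    have inj: "beta_eq A A0" "beta_eq B B0" using beq_Pi_inj[OF g(3)] by simp_all
    obtain s1' s2' s3' where "has_type Ax Rl \<Gamma> A0 (Srt s1')" using gen_pi[OF g(2)] by blast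
    then have n: "has_type Ax Rl \<Gamma> N A0" by (rule has_type.t_conv[OF t_app.hyps(3) _ inj(1)])
    have m1: "has_type Ax Rl \<Gamma> (subst M0 0 N) (subst B0 0 N)" using g(1) n by (rule subst0_typ)
    have m2: "beta_eq (subst B0 0 N) (subst B 0 N)" using beq_subst[OF beq_sym[OF inj(2)]] .
    have "has_type Ax Rl \<Gamma> (subst M0 0 N) (subst B 0 N)" by (rule has_type.t_conv[OF m1 sbt m2])
    then show ?thesis using beta_redex by simp
  next
    assume "\<exists>M'. beta M M' \<and> X = App M' N"
    then obtain M' where beta_appL: "beta M M'" "X = App M' N" by blast
    have "has_type Ax Rl \<Gamma> M' (Pi A B)" using t_app.hyps(2) beta_appL by blast
    then have "has_type Ax Rl \<Gamma> (App M' N) (subst B 0 N)" using t_app.hyps(3) by (rule has_type.t_app)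
    then show ?thesis using beta_appL by simp
  next
    assume "\<exists>N'. beta N N' \<and> X = App M N'"
    then obtain N' where beta_appR: "beta N N'" "X = App M N'" by blast
    have n': "has_type Ax Rl \<Gamma> N' A" using t_app.hyps(4) beta_appR by blast
    have a: "has_type Ax Rl \<Gamma> (App M N') (subst B 0 N')" using t_app.hyps(1) n' by (rule has_type.t_app)
    have e: "beta_eq (subst B 0 N') (subst B 0 N)" using beq_sym[OF beq_subst2[OF beta_appR(1)]] .
    have "has_type Ax Rl \<Gamma> (App M N') (subst B 0 N)" using a sbt e by (rule has_type.t_conv)
    then show ?thesis using beta_appR by simp
  qed
  have p2: "has_type Ax Rl \<Gamma>' (App M N) (subst B 0 N)" if c: "ctxr \<Gamma> \<Gamma>'" for \<Gamma>'
  proof -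
    have "has_type Ax Rl \<Gamma>' M (Pi A B)" "has_type Ax Rl \<Gamma>' N A" using t_app.hyps(2,4) c by blast+
    then show ?thesis by (rule has_type.t_app)
  qed
  show ?case using p1 p2 by blast
next
  case (t_conv \<Gamma> M A B s)
  have p1: "has_type Ax Rl \<Gamma> X B" if b: "beta M X" for X
  proof -
    have "has_type Ax Rl \<Gamma> X A" using t_conv.hyps(2) b by blast
    then show ?thesis using t_conv.hyps(3,5) by (rule has_type.t_conv)
  qed
  have p2: "has_type Ax Rl \<Gamma>' M B" if c: "ctxr \<Gamma> \<Gamma>'" for \<Gamma>'
  proof -
    have "has_type Ax Rl \<Gamma>' M A" "has_type Ax Rl \<Gamma>' B (Srt s)" using t_conv.hyps(2,4) c by blast+
    then show ?thesis using t_conv.hyps(5) by (rule has_type.t_conv)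
  qed
  show ?case using p1 p2 by blast
qed

lemma SR1: "has_type Ax Rl \<Gamma> M T \<Longrightarrow> beta M M' \<Longrightarrow> has_type Ax Rl \<Gamma> M' T"
  using SR_gen by blast

lemma SR: "beta_star M M' \<Longrightarrow> has_type Ax Rl \<Gamma> M T \<Longrightarrow> has_type Ax Rl \<Gamma> M' T"
  by (induct rule: rtranclp_induct) (auto intro: SR1)




definition funAR :: "('s \<times> 's) set \<Rightarrow> ('s \<times> 's \<times> 's) set \<Rightarrow> bool" where
  "funAR Ax Rl \<longleftrightarrow> (\<forall>a b c. (a, b) \<in> Ax \<longrightarrow> (a, c) \<in> Ax \<longrightarrow> b = c) \<and>
     (\<forall>a b c d. (a, b, c) \<in> Rl \<longrightarrow> (a, b, d) \<in> Rl \<longrightarrow> c = d)"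

lemma beq_chain: "beta_eq T L \<Longrightarrow> beta_eq T' L \<Longrightarrow> beta_eq T T'"
  by (rule beq_trans[OF _ beq_sym])

lemma uniq:
  assumes fa: "funAR Ax Rl"
  shows "has_type Ax Rl \<Gamma> M T \<Longrightarrow> has_type Ax Rl \<Gamma> M T' \<Longrightarrow> beta_eq T T'"
proof (induct M arbitrary: \<Gamma> T T')
  case (Var i)
  have a: "beta_eq T (liftn (Suc i) (\<Gamma>!i))" using gen_var[OF Var(1) refl] by blast
  have b: "beta_eq T' (liftn (Suc i) (\<Gamma>!i))" using gen_var[OF Var(2) refl] by blast
  show ?case using a b by (rule beq_chain)
next
  case (Srt x)
  obtain a where a: "(x, a) \<in> Ax" "beta_eq T (Srt a)" using gen_srt[OF Srt(1) refl] by blast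
  obtain b where b: "(x, b) \<in> Ax" "beta_eq T' (Srt b)" using gen_srt[OF Srt(2) refl] by blast
  have fa1: "\<forall>a b c. (a, b) \<in> Ax \<longrightarrow> (a, c) \<in> Ax \<longrightarrow> b = c" using fa unfolding funAR_def by (rule conjunct1)
  have ab: "a = b" using fa1 a(1) b(1) by blast
  show ?case using a(2) b(2) unfolding ab by (rule beq_chain)
next
  case (App P N)
  obtain A B where a: "has_type Ax Rl \<Gamma> P (Pi A B)" "beta_eq T (subst B 0 N)" using gen_app[OF App(3) refl] by blast
  obtain A' B' where b: "has_type Ax Rl \<Gamma> P (Pi A' B')" "beta_eq T' (subst B' 0 N)" using gen_app[OF App(4) refl] by blast
  have "beta_eq (Pi A B) (Pi A' B')" using App(1)[OF a(1) b(1)] .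
  then have "beta_eq B B'" using beq_Pi_inj by blast
  then have e: "beta_eq (subst B 0 N) (subst B' 0 N)" by (rule beq_subst)
  show ?case using beq_trans[OF a(2) e] b(2) by (rule beq_chain)
next
  case (Lam A N)
  obtain B s where a: "has_type Ax Rl (A # \<Gamma>) N B" "beta_eq T (Pi A B)" using gen_lam[OF Lam(3) refl] by blast
  obtain B' s' where b: "has_type Ax Rl (A # \<Gamma>) N B'" "beta_eq T' (Pi A B')" using gen_lam[OF Lam(4) refl] by blast
  have "beta_eq B B'" using Lam(2)[OF a(1) b(1)] .
  then have e: "beta_eq (Pi A B) (Pi A B')" by (rule beq_Pi2)
  show ?case using beq_trans[OF a(2) e] b(2) by (rule beq_chain)
next
  case (Pi A B)
  obtain s1 s2 s3 where a: "has_type Ax Rl \<Gamma> A (Srt s1)" "has_type Ax Rl (A # \<Gamma>) B (Srt s2)"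
    "(s1, s2, s3) \<in> Rl" "beta_eq T (Srt s3)" using gen_pi[OF Pi(3) refl] by blast
  obtain s1' s2' s3' where b: "has_type Ax Rl \<Gamma> A (Srt s1')" "has_type Ax Rl (A # \<Gamma>) B (Srt s2')"
    "(s1', s2', s3') \<in> Rl" "beta_eq T' (Srt s3')" using gen_pi[OF Pi(4) refl] by blast
  have "s1 = s1'" using Pi(1)[OF a(1) b(1)] by (rule beq_Srt)
  moreover have "s2 = s2'" using Pi(2)[OF a(2) b(2)] by (rule beq_Srt)
  moreover have fa2: "\<forall>a b c d. (a, b, c) \<in> Rl \<longrightarrow> (a, b, d) \<in> Rl \<longrightarrow> c = d" using fa unfolding funAR_def by (rule conjunct2)
  ultimately have ss: "s3 = s3'" using a(3) b(3) by blast
  show ?case using a(4) b(4) unfolding ss by (rule beq_chain)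
qed

lemma srt_untyped: assumes na: "\<forall>t'. (t, t') \<notin> Ax" shows "\<not> has_type Ax Rl \<Gamma> (Srt t) X"
proof
  assume h: "has_type Ax Rl \<Gamma> (Srt t) X"
  obtain s' where "(t, s') \<in> Ax" using gen_srt[OF h refl] by blast
  then show False using na by blast
qed

lemma var_not_top: assumes na: "\<forall>t'. (t, t') \<notin> Ax" shows "\<not> has_type Ax Rl \<Gamma> (Var i) (Srt t)"
proof
  assume h: "has_type Ax Rl \<Gamma> (Var i) (Srt t)"
  obtain s where g: "beta_eq (Srt t) (liftn (Suc i) (\<Gamma>!i))" "has_type Ax Rl \<Gamma> (liftn (Suc i) (\<Gamma>!i)) (Srt s)"
    using gen_var[OF h refl] by blast
  obtain c where c: "beta_star (Srt t) c" "beta_star (liftn (Suc i) (\<Gamma>!i)) c" using CR[OF g(1)] by blast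
  have "c = Srt t" using c(1) by (rule star_Srt)
  then have "has_type Ax Rl \<Gamma> (Srt t) (Srt s)" using SR[OF c(2) g(2)] by simp
  with srt_untyped[OF na] show False by (rule notE)
qed

lemma beq_App1: "beta_eq M M' \<Longrightarrow> beta_eq (App M N) (App M' N)"
  by (rule equiv_mono[where P=beta]) (auto intro: beta.intros)

fun tauln :: "('s \<times> 's) set \<Rightarrow> ('s \<times> 's \<times> 's) set \<Rightarrow> 's \<Rightarrow> 's trm list \<Rightarrow> 's trm \<Rightarrow> nat" where
  "tauln Ax Rl t \<Gamma> (Pi B C) = (if has_type Ax Rl (B # \<Gamma>) C (Srt t) then Suc (tauln Ax Rl t (B # \<Gamma>) C) else 0)"
| "tauln Ax Rl t \<Gamma> (Var i) = 0"
| "tauln Ax Rl t \<Gamma> (Srt s) = 0"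
| "tauln Ax Rl t \<Gamma> (App M N) = 0"
| "tauln Ax Rl t \<Gamma> (Lam M N) = 0"

lemma tl_nonNone:
  assumes fa: "funAR Ax Rl" and rn: "\<And>s1 s3. (s1, t, s3) \<in> Rl \<Longrightarrow> s3 = t"
    and h: "has_type Ax Rl \<Gamma> X (Srt s)" and ne: "s \<noteq> t"
  shows "tauln Ax Rl t \<Gamma> X = 0"
proof (cases X)
  case (Pi D E)
  show ?thesis
  proof (cases "has_type Ax Rl (D # \<Gamma>) E (Srt t)")
    case True
    obtain s1 s2 s3 where g: "has_type Ax Rl \<Gamma> D (Srt s1)" "has_type Ax Rl (D # \<Gamma>) E (Srt s2)"
      "(s1, s2, s3) \<in> Rl" "beta_eq (Srt s) (Srt s3)" using gen_pi[OF h Pi] by blast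
    have "s2 = t" using uniq[OF fa g(2) True] by (rule beq_Srt)
    then have "s3 = t" using rn g(3) by blast
    moreover have "s = s3" using g(4) by (rule beq_Srt)
    ultimately show ?thesis using ne by simp
  next
    case False then show ?thesis using Pi by simp
  qed
qed simp_all

lemma tl_subst:
  assumes fa: "funAR Ax Rl" and rn: "\<And>s1 s3. (s1, t, s3) \<in> Rl \<Longrightarrow> s3 = t"
    and na: "\<forall>t'. (t, t') \<notin> Ax"
  shows "has_type Ax Rl \<Gamma> C (Srt s) \<Longrightarrow> sb Ax Rl N k \<Gamma> \<Gamma>' \<Longrightarrow> tauln Ax Rl t \<Gamma>' (subst C k N) \<le> tauln Ax Rl t \<Gamma> C"
proof (induct C arbitrary: \<Gamma> \<Gamma>' N k s)
  case (Var i)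
  show ?case
  proof (cases "i = k")
    case True
    have n: "has_type Ax Rl \<Gamma>' N (Srt s)" using substitution[OF Var(1) Var(2)] True by simp
    have ne: "s \<noteq> t" using Var(1) var_not_top[OF na] by blast
    have "tauln Ax Rl t \<Gamma>' N = 0" by (rule tl_nonNone[OF fa _ n ne]) (rule rn)
    then show ?thesis using True by simp
  next
    case False
    then show ?thesis by (cases "i < k") (simp_all add: subst.simps)
  qed
next
  case (Pi D E)
  show ?case
  proof (cases "has_type Ax Rl (subst D k N # \<Gamma>') (subst E (Suc k) (lift 0 N)) (Srt t)")
    case True
    obtain s1 s2 s3 where g: "has_type Ax Rl \<Gamma> D (Srt s1)" "has_type Ax Rl (D # \<Gamma>) E (Srt s2)"
      using gen_pi[OF Pi(3) refl] by blast
    have sb': "sb Ax Rl (lift 0 N) (Suc k) (D # \<Gamma>) (subst D k N # \<Gamma>')" using Pi(4) by (rule sb.sbS)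
    have "has_type Ax Rl (subst D k N # \<Gamma>') (subst E (Suc k) (lift 0 N)) (subst (Srt s2) (Suc k) (lift 0 N))"
      using substitution[OF g(2) sb'] .
    then have "has_type Ax Rl (subst D k N # \<Gamma>') (subst E (Suc k) (lift 0 N)) (Srt s2)" by simp
    then have "beta_eq (Srt s2) (Srt t)" using True by (rule uniq[OF fa])
    then have "s2 = t" by (rule beq_Srt)
    then have et: "has_type Ax Rl (D # \<Gamma>) E (Srt t)" using g(2) by simp
    have ih: "tauln Ax Rl t (subst D k N # \<Gamma>') (subst E (Suc k) (lift 0 N)) \<le> tauln Ax Rl t (D # \<Gamma>) E"
      using Pi(2)[OF g(2) sb'] .
    show ?thesis using True et ih by simp
  next
    case False then show ?thesis by simp
  qed
qed simp_all




lemma fun_star: assumes fs: "functional_spec Srts Ax Rl" shows "funAR (ax_star Srts Ax) (rl_star Srts Rl)"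
proof -
  have fA: "\<And>s1 s2 s2'. (s1, s2) \<in> Ax \<Longrightarrow> (s1, s2') \<in> Ax \<Longrightarrow> s2 = s2'"
    using fs unfolding functional_spec_def by blast
  have fR: "\<And>s1 s2 s3 s3'. (s1, s2, s3) \<in> Rl \<Longrightarrow> (s1, s2, s3') \<in> Rl \<Longrightarrow> s3 = s3'"
    using fs unfolding functional_spec_def by blast
  have a: "b = c" if h: "(a, b) \<in> ax_star Srts Ax" "(a, c) \<in> ax_star Srts Ax" for a b c
  proof -
    consider (S1) x y where "a = Some x" "b = Some y" "(x, y) \<in> Ax" | (T1) x where "a = Some x" "b = None" "top_sort Srts Ax x"
      using h(1) unfolding ax_star_def ax_S_def by blast
    then show ?thesis
    proof cases
      case S1
      consider (S2) y' where "c = Some y'" "(x, y') \<in> Ax" | (T2) "c = None" "top_sort Srts Ax x"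
        using h(2) S1(1) unfolding ax_star_def ax_S_def by blast
      then show ?thesis
      proof cases
        case S2 then show ?thesis using S1 fA by simp
      next
        case T2 then show ?thesis using S1 unfolding top_sort_def by blast
      qed
    next
      case T1
      consider (S2) y' where "c = Some y'" "(x, y') \<in> Ax" | (T2) "c = None"
        using h(2) T1(1) unfolding ax_star_def ax_S_def by blast
      then show ?thesis
      proof cases
        case S2 then show ?thesis using T1 unfolding top_sort_def by blast
      next
        case T2 then show ?thesis using T1 by simp
      qed
    qed
  qed
  have r: "c = d" if h: "(a, b, c) \<in> rl_star Srts Rl" "(a, b, d) \<in> rl_star Srts Rl" for a b c d
  proof (cases "(a, b, c) \<in> rl_S Rl")
    case True
    then obtain x y z where xyz: "a = Some x" "b = Some y" "c = Some z" "(x, y, z) \<in> Rl" unfolding rl_S_def by blast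
    have "(a, b, d) \<in> rl_S Rl" using h(2) True unfolding rl_star_def by blast
    then obtain z' where "d = Some z'" "(x, y, z') \<in> Rl" using xyz(1,2) unfolding rl_S_def by blast
    then show ?thesis using xyz fR by simp
  next
    case False
    then have c: "c = None" "\<nexists>s3. (a, b, s3) \<in> rl_S Rl" using h(1) unfolding rl_star_def by blast+
    then have "d = None" using h(2) unfolding rl_star_def by blast
    then show ?thesis using c by simp
  qed
  show ?thesis unfolding funAR_def using a r by blast
qed

lemma noax_None: "\<forall>t'. (None, t') \<notin> ax_star Srts Ax"
  by (auto simp: ax_star_def ax_S_def)

lemma rl_None: "(s1, None, s3) \<in> rl_star Srts Rl \<Longrightarrow> s3 = None"
  by (auto simp: rl_star_def rl_S_def)

context
  fixes Srts :: "'s set" and Ax :: "('s \<times> 's) set" and Rl :: "('s \<times> 's \<times> 's) set"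
    and R :: "'s option trm list \<Rightarrow> 's option trm \<Rightarrow> 's option trm \<Rightarrow> bool"
  assumes fs: "functional_spec Srts Ax Rl"
    and ir: "is_reducibility Srts Ax Rl R"
begin

lemma Rdef: "R \<Gamma> M A \<longleftrightarrow>
        wf_S Ax Rl \<Gamma> \<and> typ_star Srts Ax Rl \<Gamma> M A \<and>
        (\<exists>s. typ_star Srts Ax Rl \<Gamma> A (Srt s) \<and>
           ((s \<noteq> None \<or> (\<exists>s'\<in>Srts. A = Srt (Some s'))) \<longrightarrow>
              (\<exists>M' A'. beta_star M M' \<and> beta_star A A' \<and> typ_S Ax Rl \<Gamma> M' A')) \<and>
           (\<forall>B C. s = None \<and> A = Pi B C \<longrightarrow>
              (\<forall>N. R \<Gamma> N B \<longrightarrow> R \<Gamma> (App M N) (subst C 0 N))))"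
  by (rule ir[unfolded is_reducibility_def, rule_format])

lemma step:
  assumes r: "R \<Gamma> M T" and t: "typ_star Srts Ax Rl \<Gamma> M' T" and e: "beta_eq M M'"
    and ih: "\<And>B C N. T = Pi B C \<Longrightarrow> typ_star Srts Ax Rl \<Gamma> T (Srt None) \<Longrightarrow> R \<Gamma> N B \<Longrightarrow>
               R \<Gamma> (App M N) (subst C 0 N) \<Longrightarrow> R \<Gamma> (App M' N) (subst C 0 N)"
  shows "R \<Gamma> M' T"
proof -
  have r': "wf_S Ax Rl \<Gamma> \<and> typ_star Srts Ax Rl \<Gamma> M T \<and>
        (\<exists>s. typ_star Srts Ax Rl \<Gamma> T (Srt s) \<and>
           ((s \<noteq> None \<or> (\<exists>s'\<in>Srts. T = Srt (Some s'))) \<longrightarrow>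
              (\<exists>M' A'. beta_star M M' \<and> beta_star T A' \<and> typ_S Ax Rl \<Gamma> M' A')) \<and>
           (\<forall>B C. s = None \<and> T = Pi B C \<longrightarrow>
              (\<forall>N. R \<Gamma> N B \<longrightarrow> R \<Gamma> (App M N) (subst C 0 N))))"
    using r by (rule Rdef[THEN iffD1])
  then obtain s where wf: "wf_S Ax Rl \<Gamma>" and ts: "typ_star Srts Ax Rl \<Gamma> T (Srt s)"
    and c1: "(s \<noteq> None \<or> (\<exists>s'\<in>Srts. T = Srt (Some s'))) \<longrightarrow>
              (\<exists>M' A'. beta_star M M' \<and> beta_star T A' \<and> typ_S Ax Rl \<Gamma> M' A')"
    and c2: "\<forall>B C. s = None \<and> T = Pi B C \<longrightarrow> (\<forall>N. R \<Gamma> N B \<longrightarrow> R \<Gamma> (App M N) (subst C 0 N))"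
    by blast
  have d1: "(\<exists>M'' A'. beta_star M' M'' \<and> beta_star T A' \<and> typ_S Ax Rl \<Gamma> M'' A')"
    if cond: "s \<noteq> None \<or> (\<exists>s'\<in>Srts. T = Srt (Some s'))"
  proof -
    obtain M1 A1 where m: "beta_star M M1" "beta_star T A1" "typ_S Ax Rl \<Gamma> M1 A1" using c1 cond by blast
    have "beta_eq M1 M'" using beq_trans[OF beq_sym[OF star_beq[OF m(1)]] e] .
    then obtain c where c: "beta_star M1 c" "beta_star M' c" using CR by blast
    have "typ_S Ax Rl \<Gamma> c A1" using SR[OF c(1) m(3)] .
    then show ?thesis using c(2) m(2) by blast
  qed
  have d2: "\<forall>N. R \<Gamma> N B \<longrightarrow> R \<Gamma> (App M' N) (subst C 0 N)" if cond: "s = None \<and> T = Pi B C" for B C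
  proof (intro allI impI)
    fix N assume n: "R \<Gamma> N B"
    have a: "R \<Gamma> (App M N) (subst C 0 N)" using c2 cond n by blast
    have "typ_star Srts Ax Rl \<Gamma> T (Srt None)" using ts cond by simp
    then show "R \<Gamma> (App M' N) (subst C 0 N)" using ih cond n a by blast
  qed
  have "wf_S Ax Rl \<Gamma> \<and> typ_star Srts Ax Rl \<Gamma> M' T \<and>
        (\<exists>s. typ_star Srts Ax Rl \<Gamma> T (Srt s) \<and>
           ((s \<noteq> None \<or> (\<exists>s'\<in>Srts. T = Srt (Some s'))) \<longrightarrow>
              (\<exists>M'' A'. beta_star M' M'' \<and> beta_star T A' \<and> typ_S Ax Rl \<Gamma> M'' A')) \<and>
           (\<forall>B C. s = None \<and> T = Pi B C \<longrightarrow>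
              (\<forall>N. R \<Gamma> N B \<longrightarrow> R \<Gamma> (App M' N) (subst C 0 N))))"
    using wf t ts d1 d2 by blast
  then show ?thesis by (rule Rdef[THEN iffD2])
qed

lemma main: "R \<Gamma> M T \<Longrightarrow> typ_star Srts Ax Rl \<Gamma> M' T \<Longrightarrow> beta_eq M M' \<Longrightarrow> R \<Gamma> M' T"
proof (induct "tauln (ax_star Srts Ax) (rl_star Srts Rl) None \<Gamma> T" arbitrary: \<Gamma> T M M' rule: less_induct)
  case less
  have fa: "funAR (ax_star Srts Ax) (rl_star Srts Rl)" using fs by (rule fun_star)
  show ?case
  proof (rule step[OF less.prems])
    fix B C N
    assume tp: "T = Pi B C" "typ_star Srts Ax Rl \<Gamma> T (Srt None)" "R \<Gamma> N B" "R \<Gamma> (App M N) (subst C 0 N)"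
    have tM: "typ_star Srts Ax Rl \<Gamma> M' (Pi B C)" using less.prems(2) tp(1) by simp
    have tN: "typ_star Srts Ax Rl \<Gamma> N B" using tp(3) Rdef by blast
    have tapp: "typ_star Srts Ax Rl \<Gamma> (App M' N) (subst C 0 N)" using tM tN by (rule has_type.t_app)
    have eapp: "beta_eq (App M N) (App M' N)" using less.prems(3) by (rule beq_App1)
    have tP: "typ_star Srts Ax Rl \<Gamma> (Pi B C) (Srt None)" using tp(1,2) by simp
    obtain s1 s2 s3 where g: "typ_star Srts Ax Rl (B # \<Gamma>) C (Srt s2)" using gen_pi[OF tP refl] by blast
    show "R \<Gamma> (App M' N) (subst C 0 N)"
    proof (cases "s2 = None")
      case True
      have l1: "tauln (ax_star Srts Ax) (rl_star Srts Rl) None \<Gamma> T = Suc (tauln (ax_star Srts Ax) (rl_star Srts Rl) None (B # \<Gamma>) C)"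
        using tp(1) g True by simp
      have sb0': "sb (ax_star Srts Ax) (rl_star Srts Rl) N 0 (B # \<Gamma>) \<Gamma>" using tN by (rule sb.sb0)
      have l2: "tauln (ax_star Srts Ax) (rl_star Srts Rl) None \<Gamma> (subst C 0 N) \<le> tauln (ax_star Srts Ax) (rl_star Srts Rl) None (B # \<Gamma>) C"
        by (rule tl_subst[OF fa _ noax_None g sb0']) (rule rl_None)
      have lt: "tauln (ax_star Srts Ax) (rl_star Srts Rl) None \<Gamma> (subst C 0 N) < tauln (ax_star Srts Ax) (rl_star Srts Rl) None \<Gamma> T"
        using l1 l2 by simp
      show ?thesis using less.hyps[OF lt tp(4) tapp eapp] .
    next
      case False
      have tT': "typ_star Srts Ax Rl \<Gamma> (subst C 0 N) (Srt s2)" using subst0_typ[OF g tN] by simp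
      show ?thesis
      proof (rule step[OF tp(4) tapp eapp])
        fix B' C' N'
        assume "typ_star Srts Ax Rl \<Gamma> (subst C 0 N) (Srt None)"
        then have "beta_eq (Srt s2) (Srt None)" using tT' uniq[OF fa] by blast
        then have "s2 = None" by (rule beq_Srt)
        then show "R \<Gamma> (App (App M' N) N') (subst C' 0 N')" using False by simp
      qed
    qed
  qed
qed

end

theorem lemma5p19:
  fixes Srts :: "'s set" and Ax :: "('s \<times> 's) set" and Rl :: "('s \<times> 's \<times> 's) set"
    and R :: "'s option trm list \<Rightarrow> 's option trm \<Rightarrow> 's option trm \<Rightarrow> bool"
  assumes "functional_spec Srts Ax Rl"
    and "is_reducibility Srts Ax Rl R"
    and "R \<Gamma> M A"
    and "typ_star Srts Ax Rl \<Gamma> M' A"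
    and "beta_eq M M'"
  shows "R \<Gamma> M' A"
  using main[OF assms(1,2)] assms(3-5) by blast


end
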